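(* Let $Y$ be a $\mathbb{Q}$-vector space, let $f:\mathbb{R}\to Y$, let $s\ge 1$, and let $I_k=(a_k,b_k)$, $k=1,\dots,s$, be nonempty open intervals of $\mathbb{R}$. If $\Delta_{h_1h_2\cdots h_s}f(x)=0$ for all $x\in\mathbb{R}$ and all $h_k\in I_k$, $k=1,\dots,s$, then $\Delta_{h_1h_2\cdots h_s}f(x)=0$ for all $(x,h_1,\dots,h_s)\in\mathbb{R}^{s+1}$.
   Context: For $f:X\to Y$ between $\mathbb{Q}$-vector spaces and $h\in X$, $\Delta_hf(x)=f(x+h)-f(x)$, and iterated differences are defined recursively by $\Delta_{h_1h_2\cdots h_s}f(x)=\Delta_{h_1}\left(\Delta_{h_2\cdots h_s}f\right)(x)$ for $s\ge 2$. *)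

theory Defs
  imports Main "HOL-Analysis.Analysis"
begin

definition diff1 :: "'a::ab_group_add \<Rightarrow> ('a \<Rightarrow> 'b::ab_group_add) \<Rightarrow> 'a \<Rightarrow> 'b" where
  "diff1 h f x = f (x + h) - f x"

fun iter_diff :: "'a::ab_group_add list \<Rightarrow> ('a \<Rightarrow> 'b::ab_group_add) \<Rightarrow> 'a \<Rightarrow> 'b" where
  "iter_diff [] f = f"
| "iter_diff (h # hs) f = diff1 h (iter_diff hs f)"

end

theory Submission
  imports Defs
begin

lemma diff1_comm: "diff1 h (diff1 k g) = diff1 k (diff1 h g)"
  by (rule ext) (simp add: diff1_def algebra_simps)

lemma iter_diff1_comm: "iter_diff xs (diff1 h g) = diff1 h (iter_diff xs g)"
  by (induction xs) (simp_all add: diff1_comm)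

lemma iter_diff_append: "iter_diff (xs @ ys) f = iter_diff xs (iter_diff ys f)"
  by (induction xs) simp_all

lemma iter_diff_mid: "iter_diff (xs @ h # ys) f = diff1 h (iter_diff (xs @ ys) f)"
  by (simp add: iter_diff_append iter_diff1_comm)

lemma small_period:
  fixes g :: "real \<Rightarrow> 'b"
  assumes per: "\<forall>t\<in>{a<..<b}. \<forall>x. g (x + t) = g x" and u: "\<bar>u\<bar> < b - a"
  shows "g (x + u) = g x"
proof -
  define t1 where "t1 = (a+b)/2 + u/2"
  define t2 where "t2 = (a+b)/2 - u/2"
  have t1: "t1 \<in> {a<..<b}" and t2: "t2 \<in> {a<..<b}"
    using u by (auto simp: t1_def t2_def abs_less_iff field_simps)
  have "g (x - t2 + t1) = g (x - t2)" using per t1 by blast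
  moreover have "g (x - t2 + t2) = g (x - t2)" using per t2 by blast
  moreover have "x - t2 + t1 = x + u" by (simp add: t1_def t2_def)
  ultimately show ?thesis by simp
qed

lemma all_period:
  fixes g :: "real \<Rightarrow> 'b"
  assumes per: "\<forall>t\<in>{a<..<b}. \<forall>x. g (x + t) = g x" and ab: "a < b"
  shows "g (x + h) = g x"
proof -
  define d where "d = b - a"
  have d: "d > 0" using ab by (simp add: d_def)
  define n :: nat where "n = nat (ceiling (\<bar>h\<bar> / d)) + 1"
  have npos: "real n > 0" by (simp add: n_def)
  have "\<bar>h\<bar> / d \<le> real (nat (ceiling (\<bar>h\<bar> / d)))"
    by linarith
  hence "\<bar>h\<bar> / d < real n" by (simp add: n_def)
  hence "\<bar>h\<bar> < real n * d" using d by (simp add: field_simps)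
  define v where "v = h / real n"
  have v: "\<bar>v\<bar> < b - a"
    using \<open>\<bar>h\<bar> < real n * d\<close> npos by (simp add: v_def d_def abs_divide field_simps)
  have step: "\<And>m y. g (y + real m * v) = g y"
  proof -
    fix m y
    show "g (y + real m * v) = g y"
    proof (induction m)
      case 0 then show ?case by simp
    next
      case (Suc m)
      have "g (y + real m * v + v) = g (y + real m * v)"
        using small_period[OF per v] by blast
      moreover have "y + real (Suc m) * v = y + real m * v + v" by (simp add: algebra_simps)
      ultimately show ?case using Suc by (simp add: add.assoc)
    qed
  qed
  have "h = real n * v" using npos by (simp add: v_def)
  thus ?thesis using step by metis
qed

theorem theorem2:
  fixes scale :: "rat \<Rightarrow> 'b::ab_group_add \<Rightarrow> 'b"
    and f :: "real \<Rightarrow> 'b"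
    and s :: nat
    and a b :: "nat \<Rightarrow> real"
  assumes "vector_space scale"
    and "s \<ge> 1"
    and "\<forall>k<s. a k < b k"
    and "\<forall>x hs. length hs = s \<and> (\<forall>k<s. hs ! k \<in> {a k<..<b k}) \<longrightarrow> iter_diff hs f x = 0"
  shows "\<forall>x hs. length hs = s \<longrightarrow> iter_diff hs f x = 0"
proof -
  have P: "\<forall>x hs. length hs = s \<and> (\<forall>k<s. j \<le> k \<longrightarrow> hs ! k \<in> {a k<..<b k}) \<longrightarrow> iter_diff hs f x = 0"
    if "j \<le> s" for j
    using that
  proof (induction j)
    case 0 then show ?case using assms(4) by simp
  next
    case (Suc j)
    have js: "j < s" using Suc.prems by simp
    note IH = Suc.IH[OF less_imp_le[OF js]]
    show ?case
    proof (intro allI impI)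
      fix x and hs :: "real list"
      assume H: "length hs = s \<and> (\<forall>k<s. Suc j \<le> k \<longrightarrow> hs ! k \<in> {a k<..<b k})"
      define g where "g = iter_diff (take j hs @ drop (Suc j) hs) f"
      have dec: "\<And>t. iter_diff (hs[j := t]) f = diff1 t g"
        using H js by (simp add: upd_conv_take_nth_drop iter_diff_mid g_def)
      have per: "\<forall>t\<in>{a j<..<b j}. \<forall>y. g (y + t) = g y"
      proof (intro ballI allI)
        fix t y assume t: "t \<in> {a j<..<b j}"
        have "iter_diff (hs[j := t]) f y = 0"
          using IH H t js by (auto simp: nth_list_update)
        thus "g (y + t) = g y" by (simp add: dec diff1_def)
      qed
      have "hs[j := hs ! j] = hs" by simp
      hence "iter_diff hs f x = diff1 (hs ! j) g x" by (metis dec)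
      also have "\<dots> = 0"
        using all_period[OF per] assms(3) js by (simp add: diff1_def)
      finally show "iter_diff hs f x = 0" .
    qed
  qed
  show ?thesis using P[of s] by simp
qed

end
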